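(* Let $f\colon X\to X$ be a piecewise $\lambda$-contraction and $x_0\in X$. If $\Omega(f)\cap S(f)=\emptyset$, then there exists $n\in\mathbb{N}$ such that every regular point of order $n$ of $f$ is a regular point and $\mathscr{C}^{(n)}$ is strongly invariant.
   Context: $(X,d)$ is a compact metric space whose open balls are connected, with $\mathrm{diam}(X)>0$, and $\lambda\in(0,1)$. A piecewise $\lambda$-contraction $f$: there exist $N\in\mathbb{N}$, open connected pairwise disjoint $A_1,\dots,A_N\subset X$ with dense union $X'$, and bi-Lipschitz $\varphi_i\colon X\to X$ with Lipschitz constant $\le\lambda$, $f|_{A_i}=\varphi_i|_{A_i}$; $S(f)=X\setminus X'$. $x$ is regular of order $n$ if $f^j(x)\notin S(f)$ for $0\le j<n$, regular if for all $n$. $\mathcal{I}_n(f)$ is the set of tuples $(i_0,\dots,i_{n-1})$ such that some regular point $x$ of order $n$ has $f^j(x)\in A_{i_j}$ for $0\le j<n$. For $\alpha=(i_0,\dots,i_{n-1})$, $\varphi^\alpha=\varphi_{i_{n-1}}\circ\cdots\circ\varphi_{i_0}$ and $\Omega(f)=\bigcap_{m\ge1}\overline{\bigcup_{n\ge m}\{\varphi^\alpha(x_0):\alpha\in\mathcal{I}_n(f)\}}$. $\mathscr{C}^{(1)}=\{A_i\}$, and for $n\ge2$, $\mathscr{C}^{(n)}$ is the collection of the nonempty open sets $A^\alpha=A_{i_0}\cap\varphi_{i_0}^{-1}(A_{i_1})\cap\cdots\cap(\varphi_{i_{n-2}}\circ\cdots\circ\varphi_{i_0})^{-1}(A_{i_{n-1}})$,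 $\alpha\in\mathcal{I}_n(f)$. A collection $\mathscr{C}$ of finitely many pairwise disjoint subsets of $X$ is strongly invariant if there is $n_0\ge1$ such that: (i) for each $A\in\mathscr{C}$ there is $A'\in\mathscr{C}$ with $f(A)\subset A'$; (ii) for each $B\in\mathscr{C}$ and $n\ge n_0$ there is $B'\in\mathscr{C}$ with $\overline{f^n(B)}\subset B'$; (iii) each $C\in\mathscr{C}$ is contained in some $A_i$. *)

theory Defs
  imports "HOL-Analysis.Analysis"
begin

definition standing_space :: "'a::metric_space set \<Rightarrow> bool" where
  "standing_space X \<longleftrightarrow> compact X \<and> (\<forall>x\<in>X. \<forall>r>0. connected (ball x r \<inter> X))
     \<and> diameter X > 0"

definition piecewise_contraction ::
  "'a::metric_space set \<Rightarrow> real \<Rightarrow> ('a \<Rightarrow> 'a) \<Rightarrow> nat \<Rightarrow> (nat \<Rightarrow> 'a set) \<Rightarrow> (nat \<Rightarrow> 'a \<Rightarrow> 'a) \<Rightarrow> bool"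
  where
  "piecewise_contraction X lam f N A \<phi> \<longleftrightarrow>
     f ` X \<subseteq> X
   \<and> (\<forall>i<N. openin (top_of_set X) (A i) \<and> connected (A i))
   \<and> (\<forall>i<N. \<forall>j<N. i \<noteq> j \<longrightarrow> A i \<inter> A j = {})
   \<and> X \<subseteq> closure (\<Union>i<N. A i)
   \<and> (\<forall>i<N. \<phi> i ` X \<subseteq> X \<and> lam-lipschitz_on X (\<phi> i)
          \<and> (\<exists>c>0. \<forall>x\<in>X. \<forall>y\<in>X. c * dist x y \<le> dist (\<phi> i x) (\<phi> i y)))
   \<and> (\<forall>i<N. \<forall>x\<in>A i. f x = \<phi> i x)"

definition singular_set :: "'a set \<Rightarrow> nat \<Rightarrow> (nat \<Rightarrow> 'a set) \<Rightarrow> 'a set" where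
  "singular_set X N A = X - (\<Union>i<N. A i)"

definition regular_of_order ::
  "'a set \<Rightarrow> ('a \<Rightarrow> 'a) \<Rightarrow> nat \<Rightarrow> (nat \<Rightarrow> 'a set) \<Rightarrow> nat \<Rightarrow> 'a \<Rightarrow> bool" where
  "regular_of_order X f N A n x \<longleftrightarrow> x \<in> X \<and> (\<forall>j<n. (f ^^ j) x \<notin> singular_set X N A)"

definition regular_point ::
  "'a set \<Rightarrow> ('a \<Rightarrow> 'a) \<Rightarrow> nat \<Rightarrow> (nat \<Rightarrow> 'a set) \<Rightarrow> 'a \<Rightarrow> bool" where
  "regular_point X f N A x \<longleftrightarrow> (\<forall>n. regular_of_order X f N A n x)"

definition itineraries ::
  "'a set \<Rightarrow> ('a \<Rightarrow> 'a) \<Rightarrow> nat \<Rightarrow> (nat \<Rightarrow> 'a set) \<Rightarrow> nat \<Rightarrow> nat list set" where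
  "itineraries X f N A n = {\<alpha>. length \<alpha> = n \<and> set \<alpha> \<subseteq> {..<N} \<and>
      (\<exists>x. regular_of_order X f N A n x \<and> (\<forall>j<n. (f ^^ j) x \<in> A (\<alpha> ! j)))}"

text \<open>phi_comp phi [i0,...,i(n-1)] = phi i(n-1) o ... o phi i0.\<close>
fun phi_comp :: "(nat \<Rightarrow> 'a \<Rightarrow> 'a) \<Rightarrow> nat list \<Rightarrow> 'a \<Rightarrow> 'a" where
  "phi_comp \<phi> [] = id"
| "phi_comp \<phi> (i # \<alpha>) = phi_comp \<phi> \<alpha> \<circ> \<phi> i"

definition Omega ::
  "'a::topological_space set \<Rightarrow> ('a \<Rightarrow> 'a) \<Rightarrow> nat \<Rightarrow> (nat \<Rightarrow> 'a set) \<Rightarrow> (nat \<Rightarrow> 'a \<Rightarrow> 'a) \<Rightarrow> 'a \<Rightarrow> 'a set" where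
  "Omega X f N A \<phi> x0 = (\<Inter>m\<in>{1..}. closure (\<Union>n\<in>{m..}. (\<lambda>\<alpha>. phi_comp \<phi> \<alpha> x0) ` itineraries X f N A n))"

text \<open>A^alpha = A_i0 \<inter> phi_i0^-1(A_i1) \<inter> ... \<inter> (phi_i(n-2) o ... o phi_i0)^-1 (A_i(n-1)).\<close>
definition cylinder :: "'a set \<Rightarrow> (nat \<Rightarrow> 'a set) \<Rightarrow> (nat \<Rightarrow> 'a \<Rightarrow> 'a) \<Rightarrow> nat list \<Rightarrow> 'a set" where
  "cylinder X A \<phi> \<alpha> = {x\<in>X. \<forall>j<length \<alpha>. phi_comp \<phi> (take j \<alpha>) x \<in> A (\<alpha> ! j)}"

definition cyl_collection ::
  "'a set \<Rightarrow> ('a \<Rightarrow> 'a) \<Rightarrow> nat \<Rightarrow> (nat \<Rightarrow> 'a set) \<Rightarrow> (nat \<Rightarrow> 'a \<Rightarrow> 'a) \<Rightarrow> nat \<Rightarrow> 'a set set" where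
  "cyl_collection X f N A \<phi> n =
     (if n = 1 then A ` {..<N}
      else {cylinder X A \<phi> \<alpha> | \<alpha>. \<alpha> \<in> itineraries X f N A n \<and> cylinder X A \<phi> \<alpha> \<noteq> {}})"

definition strongly_invariant ::
  "'a::topological_space set \<Rightarrow> ('a \<Rightarrow> 'a) \<Rightarrow> nat \<Rightarrow> (nat \<Rightarrow> 'a set) \<Rightarrow> 'a set set \<Rightarrow> bool" where
  "strongly_invariant X f N A \<C> \<longleftrightarrow>
     finite \<C> \<and> pairwise disjnt \<C> \<and> (\<forall>C\<in>\<C>. C \<subseteq> X) \<and>
     (\<exists>n0\<ge>1.
        (\<forall>C\<in>\<C>. \<exists>C'\<in>\<C>. f ` C \<subseteq> C') \<and>
        (\<forall>B\<in>\<C>. \<forall>n\<ge>n0. \<exists>B'\<in>\<C>. closure ((f ^^ n) ` B) \<subseteq> B') \<and>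
        (\<forall>C\<in>\<C>. \<exists>i<N. C \<subseteq> A i))"

end

theory Submission
  imports Defs
begin

lemma phi_comp_append: "phi_comp \<phi> (a @ b) = phi_comp \<phi> b \<circ> phi_comp \<phi> a"
  by (induction a) auto

lemma phi_comp_snoc: "phi_comp \<phi> (a @ [i]) = \<phi> i \<circ> phi_comp \<phi> a"
  by (simp add: phi_comp_append)

lemma separate_compact_closed_ms:
  fixes S T :: "'a::metric_space set"
  assumes "compact S"
    and T: "closed T" "S \<inter> T = {}"
  shows "\<exists>\<delta>>0. \<forall>x\<in>S. \<forall>y\<in>T. \<delta> \<le> dist x y"
proof cases
  assume "S \<noteq> {} \<and> T \<noteq> {}"
  then have "S \<noteq> {}" "T \<noteq> {}" by auto
  let ?inf = "\<lambda>x. infdist x T"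
  have "continuous_on S ?inf"
    by (auto intro!: continuous_at_imp_continuous_on continuous_infdist continuous_ident)
  then obtain x where x: "x \<in> S" "\<forall>y\<in>S. ?inf x \<le> ?inf y"
    using continuous_attains_inf[OF \<open>compact S\<close> \<open>S \<noteq> {}\<close>] by auto
  then have "0 < ?inf x"
    using T \<open>T \<noteq> {}\<close> in_closed_iff_infdist_zero by (auto simp: less_le infdist_nonneg)
  moreover have "\<forall>x'\<in>S. \<forall>y\<in>T. ?inf x \<le> dist x' y"
    using x by (auto intro: order_trans infdist_le)
  ultimately show ?thesis by auto
qed (auto intro!: exI[of _ 1])

locale pwc =
  fixes X :: "'a::metric_space set" and lam :: real and f :: "'a \<Rightarrow> 'a"
    and N :: nat and A :: "nat \<Rightarrow> 'a set" and \<phi> :: "nat \<Rightarrow> 'a \<Rightarrow> 'a"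
  assumes stand: "standing_space X" and lam0: "0 < lam" and lam1: "lam < 1"
    and pc: "piecewise_contraction X lam f N A \<phi>"
begin

definition it :: "'a \<Rightarrow> nat \<Rightarrow> nat" where
  "it x k = (THE i. i < N \<and> (f ^^ k) x \<in> A i)"

lemma fX: "x \<in> X \<Longrightarrow> f x \<in> X"
  using pc unfolding piecewise_contraction_def by auto

lemma Aopen: "i < N \<Longrightarrow> openin (top_of_set X) (A i)"
  using pc unfolding piecewise_contraction_def by auto

lemma AX: "i < N \<Longrightarrow> A i \<subseteq> X"
  using Aopen openin_subset by fastforce

lemma Adisj: "i < N \<Longrightarrow> j < N \<Longrightarrow> x \<in> A i \<Longrightarrow> x \<in> A j \<Longrightarrow> i = j"
  using pc unfolding piecewise_contraction_def by blast

lemma phiX: "i < N \<Longrightarrow> x \<in> X \<Longrightarrow> \<phi> i x \<in> X"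
  using pc unfolding piecewise_contraction_def by blast

lemma phiLip: "i < N \<Longrightarrow> x \<in> X \<Longrightarrow> y \<in> X \<Longrightarrow> dist (\<phi> i x) (\<phi> i y) \<le> lam * dist x y"
  using pc unfolding piecewise_contraction_def lipschitz_on_def by blast

lemma fA: "i < N \<Longrightarrow> x \<in> A i \<Longrightarrow> f x = \<phi> i x"
  using pc unfolding piecewise_contraction_def by blast

lemma funpow_X: "x \<in> X \<Longrightarrow> (f ^^ k) x \<in> X"
  by (induction k) (auto simp: fX)

lemma notS: "x \<in> X \<Longrightarrow> x \<notin> singular_set X N A \<longleftrightarrow> (\<exists>i<N. x \<in> A i)"
  unfolding singular_set_def by auto

lemma it_unique: "j < N \<Longrightarrow> (f ^^ k) x \<in> A j \<Longrightarrow> it x k = j"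
  unfolding it_def by (rule the_equality) (auto intro: Adisj)

lemma it_props: "(f ^^ k) x \<in> X \<Longrightarrow> (f ^^ k) x \<notin> singular_set X N A
   \<Longrightarrow> it x k < N \<and> (f ^^ k) x \<in> A (it x k)"
  using notS it_unique by metis

lemma reg_it: "regular_of_order X f N A n x \<Longrightarrow> k < n \<Longrightarrow> it x k < N \<and> (f ^^ k) x \<in> A (it x k)"
  unfolding regular_of_order_def using it_props funpow_X by blast

lemma phi_comp_X: "set \<gamma> \<subseteq> {..<N} \<Longrightarrow> z \<in> X \<Longrightarrow> phi_comp \<phi> \<gamma> z \<in> X"
  by (induction \<gamma> arbitrary: z) (auto simp: phiX)

lemma phi_comp_lip: "set \<gamma> \<subseteq> {..<N} \<Longrightarrow> z \<in> X \<Longrightarrow> w \<in> X \<Longrightarrow>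
   dist (phi_comp \<phi> \<gamma> z) (phi_comp \<phi> \<gamma> w) \<le> lam ^ length \<gamma> * dist z w"
proof (induction \<gamma> arbitrary: z w)
  case Nil then show ?case by simp
next
  case (Cons i \<gamma>)
  have i: "i < N" and g: "set \<gamma> \<subseteq> {..<N}" using Cons.prems by auto
  have "dist (phi_comp \<phi> (i # \<gamma>) z) (phi_comp \<phi> (i # \<gamma>) w)
      = dist (phi_comp \<phi> \<gamma> (\<phi> i z)) (phi_comp \<phi> \<gamma> (\<phi> i w))" by simp
  also have "\<dots> \<le> lam ^ length \<gamma> * dist (\<phi> i z) (\<phi> i w)"
    using Cons.IH[OF g] phiX[OF i] Cons.prems by blast
  also have "\<dots> \<le> lam ^ length \<gamma> * (lam * dist z w)"
    using phiLip[OF i] Cons.prems lam0 by (intro mult_left_mono) auto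
  finally show ?case by (simp add: algebra_simps)
qed

lemma phi_comp_cont: "set \<gamma> \<subseteq> {..<N} \<Longrightarrow> continuous_on X (phi_comp \<phi> \<gamma>)"
  apply (rule lipschitz_on_continuous_on[where L = "lam ^ length \<gamma>"])
  unfolding lipschitz_on_def using phi_comp_lip lam0 by auto

lemma f_iter_phi: "regular_of_order X f N A n x \<Longrightarrow> (f ^^ n) x = phi_comp \<phi> (map (it x) [0..<n]) x"
proof (induction n)
  case 0 then show ?case by simp
next
  case (Suc n)
  have r: "regular_of_order X f N A n x" using Suc.prems unfolding regular_of_order_def by auto
  have h: "it x n < N \<and> (f ^^ n) x \<in> A (it x n)" using reg_it[OF Suc.prems] by auto
  have "(f ^^ Suc n) x = f ((f ^^ n) x)" by simp
  also have "\<dots> = \<phi> (it x n) ((f ^^ n) x)" using fA h by blast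
  finally show ?case using Suc.IH[OF r] by (simp add: phi_comp_snoc)
qed

lemma map_it_itin: "regular_of_order X f N A n x \<Longrightarrow> map (it x) [0..<n] \<in> itineraries X f N A n"
  unfolding itineraries_def using reg_it by fastforce

lemma cyl_of_regular: "regular_of_order X f N A n x \<Longrightarrow> x \<in> cylinder X A \<phi> (map (it x) [0..<n])"
proof -
  assume r: "regular_of_order X f N A n x"
  have "x \<in> X" using r unfolding regular_of_order_def by auto
  moreover have "phi_comp \<phi> (take j (map (it x) [0..<n])) x \<in> A (map (it x) [0..<n] ! j)" if "j < n" for j
  proof -
    have rj: "regular_of_order X f N A j x" using r that unfolding regular_of_order_def by auto
    have "take j (map (it x) [0..<n]) = map (it x) [0..<j]" using that by (simp add: take_map)
    then show ?thesis using f_iter_phi[OF rj] reg_it[OF r that] that by simp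
  qed
  ultimately show ?thesis unfolding cylinder_def by auto
qed

lemma regular_of_cyl:
  assumes a: "set \<alpha> \<subseteq> {..<N}" and x: "x \<in> cylinder X A \<phi> \<alpha>"
  shows "regular_of_order X f N A (length \<alpha>) x \<and> (\<forall>j<length \<alpha>. it x j = \<alpha> ! j)"
proof -
  have xX: "x \<in> X" and c: "\<And>j. j < length \<alpha> \<Longrightarrow> phi_comp \<phi> (take j \<alpha>) x \<in> A (\<alpha> ! j)"
    using x unfolding cylinder_def by auto
  have lt: "\<And>j. j < length \<alpha> \<Longrightarrow> \<alpha> ! j < N" using a nth_mem by fastforce
  have eq: "j \<le> length \<alpha> \<Longrightarrow> (f ^^ j) x = phi_comp \<phi> (take j \<alpha>) x" for j
  proof (induction j)
    case 0 then show ?case by simp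
  next
    case (Suc j)
    then have j: "j < length \<alpha>" by simp
    have "(f ^^ Suc j) x = f (phi_comp \<phi> (take j \<alpha>) x)" using Suc by simp
    also have "\<dots> = \<phi> (\<alpha> ! j) (phi_comp \<phi> (take j \<alpha>) x)" using fA[OF lt[OF j] c[OF j]] .
    finally show ?case using j by (simp add: take_Suc_conv_app_nth phi_comp_snoc)
  qed
  have inA: "j < length \<alpha> \<Longrightarrow> (f ^^ j) x \<in> A (\<alpha> ! j)" for j using eq c by simp
  show ?thesis
    unfolding regular_of_order_def singular_set_def
    using xX inA lt it_unique by blast
qed

lemma it_shift: "it ((f ^^ m) y) k = it y (k + m)"
  unfolding it_def by (simp add: funpow_add)

lemma regular_shift: "regular_point X f N A y \<Longrightarrow> regular_point X f N A ((f ^^ m) y)"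
  unfolding regular_point_def regular_of_order_def
  by (auto simp: funpow_X simp flip: funpow_add comp_apply[of "f^^_" "f^^_"])

lemma reg_mono: "regular_of_order X f N A n x \<Longrightarrow> k \<le> n \<Longrightarrow> regular_of_order X f N A k x"
  unfolding regular_of_order_def by auto

lemma X_compact: "compact X" using stand unfolding standing_space_def by auto

lemma X_conn: "connected X"
proof -
  have d: "diameter X > 0" using stand unfolding standing_space_def by auto
  then have "X \<noteq> {}" by auto
  then obtain x where x: "x \<in> X" by auto
  have b: "bounded X" using X_compact compact_imp_bounded by auto
  have "X \<subseteq> ball x (diameter X + 1)"
    using diameter_bounded_bound[OF b x] by (auto simp: dist_commute) (smt (verit) diameter_bounded_bound[OF b x])
  then have "ball x (diameter X + 1) \<inter> X = X" by auto
  moreover have "connected (ball x (diameter X + 1) \<inter> X)"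
    using stand x d unfolding standing_space_def by auto
  ultimately show ?thesis by simp
qed

lemma X_ne: "X \<noteq> {}"
  using stand unfolding standing_space_def by auto

lemma one_piece:
  assumes T: "connected T" "T \<subseteq> X" "T \<noteq> {}" and nS: "\<forall>y\<in>T. y \<notin> singular_set X N A"
  shows "\<exists>j<N. T \<subseteq> A j"
proof -
  have "\<forall>i. \<exists>Op. i < N \<longrightarrow> open Op \<and> A i = X \<inter> Op"
    using Aopen openin_open by metis
  then obtain Op where Op: "\<And>i. i < N \<Longrightarrow> open (Op i) \<and> A i = X \<inter> Op i" by metis
  obtain y where y: "y \<in> T" using T by auto
  then obtain j where j: "j < N" "y \<in> A j" using nS notS T by blast
  define U where "U = (\<Union>i\<in>{..<N} - {j}. Op i)"
  have oU: "open U" unfolding U_def using Op by auto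
  have cov: "T \<subseteq> Op j \<union> U"
  proof
    fix z assume z: "z \<in> T"
    then obtain i where "i < N" "z \<in> A i" using nS notS T by blast
    then show "z \<in> Op j \<union> U" unfolding U_def using Op by (cases "i = j") auto
  qed
  have dis: "Op j \<inter> U \<inter> T = {}"
  proof (rule ccontr)
    assume "Op j \<inter> U \<inter> T \<noteq> {}"
    then obtain z i where "z \<in> Op j" "z \<in> T" "i < N" "i \<noteq> j" "z \<in> Op i" unfolding U_def by auto
    then have "z \<in> A j" "z \<in> A i" using Op j T by auto
    then show False using Adisj \<open>i < N\<close> j \<open>i \<noteq> j\<close> by blast
  qed
  have "Op j \<inter> T = {} \<or> U \<inter> T = {}"
    using connectedD[OF T(1) _ oU dis cov] Op j by blast
  moreover have "y \<in> Op j" using Op j by auto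
  ultimately have "U \<inter> T = {}" using y by auto
  then have "T \<subseteq> X \<inter> Op j" using cov T by auto
  then have "T \<subseteq> A j" using Op[OF j(1)] by auto
  then show ?thesis using j by auto
qed

lemma S_closed: "closed (singular_set X N A)"
proof -
  have "closedin (top_of_set X) (X - (\<Union>i<N. A i))"
    unfolding closedin_def using Aopen by (auto intro!: openin_Union simp: Diff_Diff_Int)
  then show ?thesis unfolding singular_set_def
    using closedin_closed_trans compact_imp_closed X_compact by blast
qed

lemma itin_set: "\<gamma> \<in> itineraries X f N A m \<Longrightarrow> set \<gamma> \<subseteq> {..<N} \<and> length \<gamma> = m"
  unfolding itineraries_def by auto

lemma key:
  assumes x0: "x0 \<in> X" and om: "Omega X f N A \<phi> x0 \<inter> singular_set X N A = {}"
  shows "\<exists>n0\<ge>1. \<forall>m\<ge>n0. \<forall>\<gamma>\<in>itineraries X f N A m. \<exists>j<N. phi_comp \<phi> \<gamma> ` X \<subseteq> A j"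
proof -
  define S where "S = singular_set X N A"
  define K where "K m = closure (\<Union>n\<in>{m..}. (\<lambda>\<alpha>. phi_comp \<phi> \<alpha> x0) ` itineraries X f N A n)" for m
  define \<Omega> where "\<Omega> = Omega X f N A \<phi> x0"
  have OmK: "\<Omega> = (\<Inter>m\<in>{1..}. K m)" unfolding \<Omega>_def Omega_def K_def by simp
  have Xc: "closed X" using X_compact compact_imp_closed by auto
  have KX: "K m \<subseteq> X" for m
    unfolding K_def using Xc phi_comp_X itin_set x0 by (intro closure_minimal) auto
  have Kmono: "m \<le> m' \<Longrightarrow> K m' \<subseteq> K m" for m m'
    unfolding K_def by (intro closure_mono) force
  have Kcl: "closed (K m)" for m unfolding K_def by simp
  have OmX: "\<Omega> \<subseteq> X" using OmK KX by blast
  have Omc: "compact \<Omega>"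
  proof -
    have "closed \<Omega>" using OmK Kcl by auto
    then have "compact (\<Omega> \<inter> X)" using closed_Int_compact X_compact by blast
    then show ?thesis using OmX by (simp add: Int_absorb2)
  qed
  have "\<Omega> \<inter> S = {}" using om unfolding \<Omega>_def S_def .
  then obtain \<delta> where d0: "\<delta> > 0" and dsep: "\<And>x y. x \<in> \<Omega> \<Longrightarrow> y \<in> S \<Longrightarrow> \<delta> \<le> dist x y"
    using separate_compact_closed_ms[OF Omc S_closed[folded S_def]] by blast
  define V where "V = (\<Union>w\<in>\<Omega>. ball w (\<delta>/2))"
  have oV: "open V" unfolding V_def by auto
  have OmV: "\<Omega> \<subseteq> V" unfolding V_def using d0 by force
  have "\<exists>M\<ge>1. \<forall>n\<ge>M. \<forall>\<alpha>\<in>itineraries X f N A n. phi_comp \<phi> \<alpha> x0 \<in> V"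
  proof (rule ccontr)
    assume H: "\<not> ?thesis"
    have cXV: "compact (X - V)"
    proof -
      have "compact ((- V) \<inter> X)" using oV X_compact by (intro closed_Int_compact) (auto simp: closed_Compl)
      moreover have "(- V) \<inter> X = X - V" by auto
      ultimately show ?thesis by simp
    qed
    have "(X - V) \<inter> \<Inter> (K ` {1..}) \<noteq> {}"
    proof (rule compact_imp_fip[OF cXV])
      show "\<And>T. T \<in> K ` {1..} \<Longrightarrow> closed T" using Kcl by auto
    next
      fix F' assume F': "finite F'" "F' \<subseteq> K ` {1..}"
      then obtain I where I: "I \<subseteq> {1..}" "finite I" "F' = K ` I"
        using finite_subset_image by metis
      define M where "M = Max (insert 1 I)"
      have M1: "M \<ge> 1" unfolding M_def using I by simp
      have MI: "i \<in> I \<Longrightarrow> i \<le> M" for i unfolding M_def using I by simp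
      obtain n \<alpha> where n: "n \<ge> M" "\<alpha> \<in> itineraries X f N A n" "phi_comp \<phi> \<alpha> x0 \<notin> V"
        using H M1 by blast
      define p where "p = phi_comp \<phi> \<alpha> x0"
      have pX: "p \<in> X" unfolding p_def using phi_comp_X itin_set n x0 by blast
      have "p \<in> K M" unfolding K_def p_def using n closure_subset by fastforce
      then have "p \<in> \<Inter> F'" using I Kmono MI by blast
      then show "(X - V) \<inter> \<Inter> F' \<noteq> {}" using pX n p_def by blast
    qed
    then show False using OmK OmV by auto
  qed
  then obtain M where M: "M \<ge> 1" "\<And>n \<alpha>. n \<ge> M \<Longrightarrow> \<alpha> \<in> itineraries X f N A n \<Longrightarrow> phi_comp \<phi> \<alpha> x0 \<in> V"
    by blast
  define D where "D = diameter X"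
  have bX: "bounded X" using X_compact compact_imp_bounded by auto
  have D0: "D \<ge> 0" unfolding D_def using diameter_bounded_bound[OF bX] x0 by (meson dual_order.trans zero_le_dist)
  obtain k where k: "lam ^ k < \<delta> / (2 * (D + 1))"
    using real_arch_pow_inv[OF _ lam1, of "\<delta> / (2 * (D + 1))"] d0 D0 by auto
  define n0 where "n0 = max M k"
  have "\<forall>m\<ge>n0. \<forall>\<gamma>\<in>itineraries X f N A m. \<exists>j<N. phi_comp \<phi> \<gamma> ` X \<subseteq> A j"
  proof (intro allI impI ballI)
    fix m \<gamma> assume m: "n0 \<le> m" and g: "\<gamma> \<in> itineraries X f N A m"
    have gs: "set \<gamma> \<subseteq> {..<N}" and gl: "length \<gamma> = m" using itin_set[OF g] by auto
    have "phi_comp \<phi> \<gamma> x0 \<in> V" using M(2)[OF _ g] m unfolding n0_def by auto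
    then obtain w where w: "w \<in> \<Omega>" "dist w (phi_comp \<phi> \<gamma> x0) < \<delta>/2" unfolding V_def by auto
    have lk: "lam ^ m \<le> lam ^ k" using m lam0 lam1 unfolding n0_def by (intro power_decreasing) auto
    have small: "lam ^ k * D < \<delta>/2"
    proof -
      have "lam ^ k * D \<le> lam ^ k * (D + 1)" using lam0 by simp
      also have "\<dots> < \<delta> / (2 * (D + 1)) * (D + 1)" using k D0 by (intro mult_strict_right_mono) auto
      also have "\<dots> = \<delta>/2" using D0 by (simp add: field_simps)
      finally show ?thesis .
    qed
    have nS: "\<forall>y\<in>phi_comp \<phi> \<gamma> ` X. y \<notin> singular_set X N A"
    proof
      fix y assume "y \<in> phi_comp \<phi> \<gamma> ` X"
      then obtain z where z: "z \<in> X" "y = phi_comp \<phi> \<gamma> z" by auto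
      have "dist y (phi_comp \<phi> \<gamma> x0) \<le> lam ^ m * dist z x0"
        using phi_comp_lip[OF gs z(1) x0] z gl by simp
      also have "\<dots> \<le> lam ^ k * D"
        using lk diameter_bounded_bound[OF bX z(1) x0] lam0 D0 unfolding D_def
        by (intro mult_mono) auto
      finally have "dist w y < \<delta>" using small w(2) dist_triangle[of w y "phi_comp \<phi> \<gamma> x0"]
        by (simp add: dist_commute)
      then show "y \<notin> singular_set X N A" using dsep[OF w(1)] unfolding S_def by force
    qed
    show "\<exists>j<N. phi_comp \<phi> \<gamma> ` X \<subseteq> A j"
    proof (rule one_piece)
      show "connected (phi_comp \<phi> \<gamma> ` X)"
        using connected_continuous_image[OF phi_comp_cont[OF gs] X_conn] .
      show "phi_comp \<phi> \<gamma> ` X \<subseteq> X" using phi_comp_X gs by auto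
      show "phi_comp \<phi> \<gamma> ` X \<noteq> {}" using X_ne by auto
    qed (rule nS)
  qed
  then show ?thesis using M(1) unfolding n0_def by (intro exI[of _ n0]) (auto simp: n0_def)
qed

lemma main:
  assumes x0: "x0 \<in> X" and om: "Omega X f N A \<phi> x0 \<inter> singular_set X N A = {}"
  shows "\<exists>n\<ge>1. (\<forall>x. regular_of_order X f N A n x \<longrightarrow> regular_point X f N A x)
              \<and> strongly_invariant X f N A (cyl_collection X f N A \<phi> n)"
proof -
  obtain n0 where n01: "n0 \<ge> 1"
    and kp: "\<And>m \<gamma>. m \<ge> n0 \<Longrightarrow> \<gamma> \<in> itineraries X f N A m \<Longrightarrow> \<exists>j<N. phi_comp \<phi> \<gamma> ` X \<subseteq> A j"
    using key[OF x0 om] by blast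
  define n where "n = max n0 2"
  have nn0: "n \<ge> n0" and n2: "n \<ge> 2" unfolding n_def by auto
  have step: "regular_of_order X f N A (Suc m) x"
    if m: "m \<ge> n0" and r: "regular_of_order X f N A m x" for m x
  proof -
    define \<gamma> where "\<gamma> = map (it x) [0..<m]"
    have g: "\<gamma> \<in> itineraries X f N A m" unfolding \<gamma>_def using map_it_itin[OF r] .
    obtain j where j: "j < N" "phi_comp \<phi> \<gamma> ` X \<subseteq> A j" using kp[OF m g] by blast
    have xX: "x \<in> X" using r unfolding regular_of_order_def by auto
    have "(f ^^ m) x \<in> A j" using f_iter_phi[OF r] j xX unfolding \<gamma>_def by auto
    then have "(f ^^ m) x \<notin> singular_set X N A" using j AX notS by blast
    then show ?thesis using r unfolding regular_of_order_def by (auto simp: less_Suc_eq)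
  qed
  have regfwd: "regular_point X f N A x" if r: "regular_of_order X f N A n x" for x
  proof -
    have "regular_of_order X f N A (n + d) x" for d
      by (induction d) (use r step nn0 in auto)
    then show ?thesis unfolding regular_point_def
      using reg_mono by (metis le_add_diff_inverse nat_le_linear r)
  qed
  have regpt: "regular_point X f N A x \<Longrightarrow> regular_of_order X f N A k x" for x k
    unfolding regular_point_def by auto
  have agree: "it x k = it y k"
    if a: "\<alpha> \<in> itineraries X f N A n" and x: "x \<in> cylinder X A \<phi> \<alpha>" and y: "y \<in> cylinder X A \<phi> \<alpha>"
    for \<alpha> x y k
  proof -
    have as: "set \<alpha> \<subseteq> {..<N}" "length \<alpha> = n" using itin_set[OF a] by auto
    have rx: "regular_of_order X f N A n x" "\<forall>j<n. it x j = \<alpha> ! j"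
      using regular_of_cyl[OF as(1) x] as by auto
    have ry: "regular_of_order X f N A n y" "\<forall>j<n. it y j = \<alpha> ! j"
      using regular_of_cyl[OF as(1) y] as by auto
    have px: "regular_point X f N A x" and py: "regular_point X f N A y" using rx ry regfwd by auto
    have xX: "x \<in> X" and yX: "y \<in> X" using x y unfolding cylinder_def by auto
    show ?thesis
    proof (induction k rule: less_induct)
      case (less k)
      show ?case
      proof (cases "k < n")
        case True then show ?thesis using rx ry by simp
      next
        case False
        have eqm: "map (it x) [0..<k] = map (it y) [0..<k]"
          by (intro map_cong) (auto intro: less.IH)
        have rkx: "regular_of_order X f N A k x" and rky: "regular_of_order X f N A k y"
          using px py regpt by auto
        have g: "map (it x) [0..<k] \<in> itineraries X f N A k" using map_it_itin[OF rkx] .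
        obtain j where j: "j < N" "phi_comp \<phi> (map (it x) [0..<k]) ` X \<subseteq> A j"
          using kp[OF _ g] False nn0 by auto
        have "(f ^^ k) x \<in> A j" using f_iter_phi[OF rkx] j xX by auto
        moreover have "(f ^^ k) y \<in> A j" using f_iter_phi[OF rky] j yX eqm by auto
        ultimately show ?thesis using it_unique j by metis
      qed
    qed
  qed
  have shift_cyl: "(f ^^ m) y \<in> cylinder X A \<phi> (map (\<lambda>k. it x (k + m)) [0..<n])
      \<and> map (\<lambda>k. it x (k + m)) [0..<n] \<in> itineraries X f N A n"
    if a: "\<alpha> \<in> itineraries X f N A n" and x: "x \<in> cylinder X A \<phi> \<alpha>" and y: "y \<in> cylinder X A \<phi> \<alpha>"
    for \<alpha> x y m
  proof -
    have as: "set \<alpha> \<subseteq> {..<N}" "length \<alpha> = n" using itin_set[OF a] by auto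
    have py: "regular_point X f N A y" using regular_of_cyl[OF as(1) y] as regfwd by auto
    have pfy: "regular_point X f N A ((f ^^ m) y)" using regular_shift[OF py] .
    have rfy: "regular_of_order X f N A n ((f ^^ m) y)" using regpt[OF pfy] .
    have e: "map (it ((f ^^ m) y)) [0..<n] = map (\<lambda>k. it x (k + m)) [0..<n]"
      by (intro map_cong) (auto simp: it_shift agree[OF a x y])
    show ?thesis using cyl_of_regular[OF rfy, unfolded e] map_it_itin[OF rfy, unfolded e] by blast
  qed
  have coll: "cyl_collection X f N A \<phi> n =
      {cylinder X A \<phi> \<alpha> | \<alpha>. \<alpha> \<in> itineraries X f N A n \<and> cylinder X A \<phi> \<alpha> \<noteq> {}}"
    unfolding cyl_collection_def using n2 by auto
  have fin: "finite (cyl_collection X f N A \<phi> n)"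
  proof -
    have "itineraries X f N A n \<subseteq> {xs. set xs \<subseteq> {..<N} \<and> length xs = n}"
      using itin_set by blast
    then have "finite (itineraries X f N A n)"
      using finite_lists_length_eq[of "{..<N}" n] finite_subset by blast
    then have "finite (cylinder X A \<phi> ` itineraries X f N A n)" by simp
    moreover have "cyl_collection X f N A \<phi> n \<subseteq> cylinder X A \<phi> ` itineraries X f N A n"
      unfolding coll by auto
    ultimately show ?thesis using finite_subset by blast
  qed
  have pw: "pairwise disjnt (cyl_collection X f N A \<phi> n)"
    unfolding coll pairwise_def disjnt_def
  proof (clarify)
    fix \<alpha> \<beta> assume a: "\<alpha> \<in> itineraries X f N A n" and b: "\<beta> \<in> itineraries X f N A n"
      and ne: "cylinder X A \<phi> \<alpha> \<noteq> cylinder X A \<phi> \<beta>"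
    show "cylinder X A \<phi> \<alpha> \<inter> cylinder X A \<phi> \<beta> = {}"
    proof (rule ccontr)
      assume "cylinder X A \<phi> \<alpha> \<inter> cylinder X A \<phi> \<beta> \<noteq> {}"
      then obtain z where z: "z \<in> cylinder X A \<phi> \<alpha>" "z \<in> cylinder X A \<phi> \<beta>" by auto
      have as: "set \<alpha> \<subseteq> {..<N}" "length \<alpha> = n" using itin_set[OF a] by auto
      have bs: "set \<beta> \<subseteq> {..<N}" "length \<beta> = n" using itin_set[OF b] by auto
      have "\<alpha> = \<beta>"
        using regular_of_cyl[OF as(1) z(1)] regular_of_cyl[OF bs(1) z(2)] as bs
        by (intro nth_equalityI) auto
      then show False using ne by simp
    qed
  qed
  have sub: "\<forall>C\<in>cyl_collection X f N A \<phi> n. C \<subseteq> X"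
    unfolding coll cylinder_def by auto
  have c1: "\<forall>C\<in>cyl_collection X f N A \<phi> n. \<exists>C'\<in>cyl_collection X f N A \<phi> n. f ` C \<subseteq> C'"
  proof
    fix C assume "C \<in> cyl_collection X f N A \<phi> n"
    then obtain \<alpha> where a: "\<alpha> \<in> itineraries X f N A n" and C: "C = cylinder X A \<phi> \<alpha>" "C \<noteq> {}"
      unfolding coll by auto
    then obtain x where x: "x \<in> C" by auto
    define \<beta> where "\<beta> = map (\<lambda>k. it x (k + 1)) [0..<n]"
    have "f ` C \<subseteq> cylinder X A \<phi> \<beta>"
      using shift_cyl[OF a, of x _ 1] x C unfolding \<beta>_def by auto
    moreover have "cylinder X A \<phi> \<beta> \<in> cyl_collection X f N A \<phi> n"
      using shift_cyl[OF a, of x x 1] x C unfolding coll \<beta>_def by auto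
    ultimately show "\<exists>C'\<in>cyl_collection X f N A \<phi> n. f ` C \<subseteq> C'" by blast
  qed
  have c2: "\<forall>B\<in>cyl_collection X f N A \<phi> n. \<forall>m\<ge>n0. \<exists>B'\<in>cyl_collection X f N A \<phi> n.
              closure ((f ^^ m) ` B) \<subseteq> B'"
  proof (intro ballI allI impI)
    fix B m assume "B \<in> cyl_collection X f N A \<phi> n" and m: "n0 \<le> m"
    then obtain \<alpha> where a: "\<alpha> \<in> itineraries X f N A n" and B: "B = cylinder X A \<phi> \<alpha>" "B \<noteq> {}"
      unfolding coll by auto
    then obtain x where x: "x \<in> B" by auto
    have as: "set \<alpha> \<subseteq> {..<N}" "length \<alpha> = n" using itin_set[OF a] by auto
    have px: "regular_point X f N A x" using regular_of_cyl[OF as(1)] x B as regfwd by auto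
    have xX: "x \<in> X" using x B unfolding cylinder_def by auto
    define \<gamma> where "\<gamma> = map (it x) [0..<m]"
    define \<beta> where "\<beta> = map (\<lambda>k. it x (k + m)) [0..<n]"
    have gs: "set \<gamma> \<subseteq> {..<N}" using itin_set[OF map_it_itin[OF regpt[OF px]]] unfolding \<gamma>_def by blast
    have Bin: "cylinder X A \<phi> \<beta> \<in> cyl_collection X f N A \<phi> n"
      using shift_cyl[OF a, of x x m] x B unfolding coll \<beta>_def by auto
    have img: "(f ^^ m) ` B \<subseteq> phi_comp \<phi> \<gamma> ` X"
    proof
      fix u assume "u \<in> (f ^^ m) ` B"
      then obtain y where y: "y \<in> B" "u = (f ^^ m) y" by auto
      have py: "regular_point X f N A y" using regular_of_cyl[OF as(1)] y B as regfwd by auto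
      have yX: "y \<in> X" using y B unfolding cylinder_def by auto
      have "map (it y) [0..<m] = \<gamma>" unfolding \<gamma>_def
        using agree[OF a, of y x] x y B(1) by (intro map_cong) simp_all
      then show "u \<in> phi_comp \<phi> \<gamma> ` X" using f_iter_phi[OF regpt[OF py]] y yX by auto
    qed
    have cl: "closed (phi_comp \<phi> \<gamma> ` X)"
      using compact_continuous_image[OF phi_comp_cont[OF gs] X_compact] compact_imp_closed by blast
    have inc: "phi_comp \<phi> \<gamma> ` X \<subseteq> cylinder X A \<phi> \<beta>"
    proof
      fix u assume "u \<in> phi_comp \<phi> \<gamma> ` X"
      then obtain z where z: "z \<in> X" "u = phi_comp \<phi> \<gamma> z" by auto
      have uX: "u \<in> X" using phi_comp_X[OF gs z(1)] z by simp
      have "phi_comp \<phi> (take j \<beta>) u \<in> A (\<beta> ! j)" if j: "j < n" for j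
      proof -
        define \<delta> where "\<delta> = map (it x) [0..<m + j]"
        have tj: "take j \<beta> = map (\<lambda>k. it x (k + m)) [0..<j]" unfolding \<beta>_def using j by (simp add: take_map)
        have de: "\<gamma> @ take j \<beta> = \<delta>" unfolding tj \<gamma>_def \<delta>_def
          by (rule nth_equalityI) (auto simp: nth_append add.commute)
        have rd: "regular_of_order X f N A (m + j) x" using regpt[OF px] .
        have d: "\<delta> \<in> itineraries X f N A (m + j)" unfolding \<delta>_def using map_it_itin[OF rd] .
        obtain j' where j': "j' < N" "phi_comp \<phi> \<delta> ` X \<subseteq> A j'" using kp[OF _ d] m by auto
        have "(f ^^ (m + j)) x \<in> A j'" using f_iter_phi[OF rd] j' xX unfolding \<delta>_def by auto
        then have "it x (m + j) = j'" using it_unique j' by blast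
        moreover have "phi_comp \<phi> (take j \<beta>) u = phi_comp \<phi> \<delta> z"
          unfolding de[symmetric] using z by (simp add: phi_comp_append)
        ultimately show ?thesis using j' z j unfolding \<beta>_def by (auto simp: add.commute[of j m])
      qed
      then show "u \<in> cylinder X A \<phi> \<beta>" unfolding cylinder_def \<beta>_def using uX by auto
    qed
    have "closure ((f ^^ m) ` B) \<subseteq> cylinder X A \<phi> \<beta>"
      using closure_minimal[OF img cl] inc by blast
    then show "\<exists>B'\<in>cyl_collection X f N A \<phi> n. closure ((f ^^ m) ` B) \<subseteq> B'" using Bin by blast
  qed
  have c3: "\<forall>C\<in>cyl_collection X f N A \<phi> n. \<exists>i<N. C \<subseteq> A i"
  proof
    fix C assume "C \<in> cyl_collection X f N A \<phi> n"
    then obtain \<alpha> where a: "\<alpha> \<in> itineraries X f N A n" and C: "C = cylinder X A \<phi> \<alpha>"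
      unfolding coll by auto
    have as: "set \<alpha> \<subseteq> {..<N}" "length \<alpha> = n" using itin_set[OF a] by auto
    have l0: "0 < length \<alpha>" using as n2 by simp
    have "\<alpha> ! 0 \<in> set \<alpha>" using nth_mem[OF l0] .
    then have "\<alpha> ! 0 < N" using as by blast
    moreover have "C \<subseteq> A (\<alpha> ! 0)"
    proof
      fix z assume "z \<in> C"
      then have "phi_comp \<phi> (take 0 \<alpha>) z \<in> A (\<alpha> ! 0)" using l0 unfolding C cylinder_def by blast
      then show "z \<in> A (\<alpha> ! 0)" by simp
    qed
    ultimately show "\<exists>i<N. C \<subseteq> A i" by blast
  qed
  have "strongly_invariant X f N A (cyl_collection X f N A \<phi> n)"
    unfolding strongly_invariant_def using fin pw sub c1 c2 c3 n01 by blast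
  then show ?thesis using regfwd n2 by (intro exI[of _ n]) auto
qed

end

theorem lemma3p6:
  fixes X :: "'a::metric_space set" and lam :: real and f :: "'a \<Rightarrow> 'a"
    and N :: nat and A :: "nat \<Rightarrow> 'a set" and \<phi> :: "nat \<Rightarrow> 'a \<Rightarrow> 'a" and x0 :: 'a
  assumes "standing_space X"
    and "0 < lam" and "lam < 1"
    and "piecewise_contraction X lam f N A \<phi>"
    and "x0 \<in> X"
    and "Omega X f N A \<phi> x0 \<inter> singular_set X N A = {}"
  shows "\<exists>n\<ge>1. (\<forall>x. regular_of_order X f N A n x \<longrightarrow> regular_point X f N A x)
              \<and> strongly_invariant X f N A (cyl_collection X f N A \<phi> n)"
proof -
  interpret pwc X lam f N A \<phi> using assms by unfold_locales
  show ?thesis using main assms by blast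
qed

end
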